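(* Let $B$ be a flat bouquet of $n$-circles surface, consisting of a disc $\mathcal{D}$ and $n$ flat bands each attached at both of its ends to $\partial\mathcal{D}$. Then there is a finite sequence of band slides transforming $B$ into a flat bouquet of $n$-circles surface $\mathcal{F}$ (with the same boundary link type) together with a choice of base point $P \in \partial\mathcal{D}$ such that, with respect to the labeling determined by $P$, every element of $L(\mathcal{F})$ has the form $\{i,\overline{j}\}$ with $i,j \in \{1,\dots,n\}$; that is, every band of $\mathcal{F}$ joins an interval labeled by an element of $\{1,\dots,n\}$ to an interval labeled by an element of $\{\overline{1},\dots,\overline{n}\}$.
   Context: A flat bouquet of $n$-circles surface is a compact oriented surface in $\mathbb{S}^3$ obtained as a thickening of a spatial embedding of the bouquet of $n$ circles (one vertex, $n$ loops) with zero voltage on every edge: a disc $\mathcal{D}$ in the plane of a diagram with $n$ bands attached to $\partial\mathcal{D}$ at $2n$ disjoint intervals, each band lying flat in the blackboard framing (no twists, equivalently framing $0$), bands possibly linked with one another but not knotted. Given a point $P \in \partial\mathcal{D}$ not in any attaching interval, label the $2n$ attaching intervals clockwise starting from $P$ by $1,2,\dots,n,\overline{1},\overline{2},\dots,\overline{n}$; changing $P$ is called relabeling. Each band joins two intervals and is recorded by the $2$-element set of their labels; $L(\mathcal{F})$ denotes the set of these $n$ two-element sets. A band slide moves one end of a band along (parallel to) another band across the disc; it is an isotopy of the surface and preserves the isotopy type of the boundary link. *)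

theory Defs
  imports Main "HOL-Library.Multiset"
begin

text \<open>The 2n attaching intervals on the boundary of the disc, read clockwise starting
  just after a base point P, are recorded as a list w of length 2n; the entry w!i
  is the name (in {0..<n}) of the band attached at the i-th interval.  Position i < n carries the label i+1, position
  n+i carries the label (i+1)-bar.\<close>

definition bouquet_word :: "nat \<Rightarrow> nat list \<Rightarrow> bool" where
  "bouquet_word n w \<longleftrightarrow> length w = 2 * n \<and> (\<forall>x \<in> set w. x < n)
      \<and> (\<forall>a < n. count (mset w) a = 2)"

text \<open>Relabeling: changing the base point P rotates the clockwise word.\<close>
definition relabel :: "nat list \<Rightarrow> nat list \<Rightarrow> bool" where
  "relabel w w' \<longleftrightarrow> (\<exists>k. w' = rotate k w)"

text \<open>Band slide (for untwisted, orientable bands): the end of band a sitting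
  immediately counterclockwise of an end of a different band b is slid along b;
  it arrives immediately clockwise of the other end of b.  Using relabeling we
  may assume the two adjacent ends are at the start of the word.\<close>
definition band_slide :: "nat list \<Rightarrow> nat list \<Rightarrow> bool" where
  "band_slide w w' \<longleftrightarrow> (\<exists>a b v1 v2. a \<noteq> b \<and> b \<notin> set v1 \<and>
      w = [a, b] @ v1 @ [b] @ v2 \<and> w' = [b] @ v1 @ [b, a] @ v2)"

text \<open>One move: a band slide, its inverse (band slides are reversible), or a relabeling.\<close>
definition bouquet_move :: "nat list \<Rightarrow> nat list \<Rightarrow> bool" where
  "bouquet_move w w' \<longleftrightarrow> band_slide w w' \<or> band_slide w' w \<or> relabel w w'"

definition bands_split :: "nat \<Rightarrow> nat list \<Rightarrow> bool" where
  "bands_split n w \<longleftrightarrow> (\<forall>a < n. count (mset (take n w)) a = 1 \<and> count (mset (drop n w)) a = 1)"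

end

theory Submission
  imports Defs
begin

lemma mset_rotate': "mset (rotate k xs) = mset xs"
  by (metis append_take_drop_id mset_append union_commute rotate_drop_take)

lemma move_mset: "bouquet_move w w' \<Longrightarrow> mset w' = mset w"
  unfolding bouquet_move_def band_slide_def relabel_def
  by (auto simp: mset_rotate')

lemma reach_mset: "bouquet_move\<^sup>*\<^sup>* w w' \<Longrightarrow> mset w' = mset w"
  by (induction rule: rtranclp_induct) (auto dest: move_mset)

lemma rot_move: "bouquet_move w (rotate k w)"
  unfolding bouquet_move_def relabel_def by blast

lemma slide_reach:
  assumes "a \<noteq> b" "b \<notin> set v1"
  shows "bouquet_move\<^sup>*\<^sup>* (s @ [a,b] @ v1 @ [b] @ v2) (s @ [b] @ v1 @ [b,a] @ v2)"
proof -
  have 1: "bouquet_move (s @ [a,b] @ v1 @ [b] @ v2) ([a,b] @ v1 @ [b] @ v2 @ s)"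
    using rot_move[of "s @ [a,b] @ v1 @ [b] @ v2" "length s"] by (simp add: rotate_append)
  have 2: "bouquet_move ([a,b] @ v1 @ [b] @ (v2 @ s)) ([b] @ v1 @ [b,a] @ (v2 @ s))"
    unfolding bouquet_move_def band_slide_def using assms by blast
  have 3: "bouquet_move ([b] @ v1 @ [b,a] @ v2 @ s) (s @ [b] @ v1 @ [b,a] @ v2)"
    using rot_move[of "([b] @ v1 @ [b,a] @ v2) @ s" "length ([b] @ v1 @ [b,a] @ v2)"]
    by (simp only: rotate_append) simp
  show ?thesis using 1 2 3 by (simp add: converse_rtranclp_into_rtranclp)
qed

lemma pull:
  assumes "z \<notin> set q" "z \<in> set v"
  shows "\<exists>v'. bouquet_move\<^sup>*\<^sup>* (s @ q @ [z] @ v) (s @ [z] @ v')"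
  using assms
proof (induction q arbitrary: v rule: rev_induct)
  case Nil then show ?case by auto
next
  case (snoc u q)
  from snoc.prems(2) obtain v1 v2 where v: "v = v1 @ [z] @ v2" "z \<notin> set v1"
    using split_list_first by fastforce
  have uz: "u \<noteq> z" using snoc.prems(1) by auto
  have "bouquet_move\<^sup>*\<^sup>* ((s @ q) @ [u,z] @ v1 @ [z] @ v2) ((s @ q) @ [z] @ v1 @ [z,u] @ v2)"
    using slide_reach[OF uz v(2)] by blast
  hence s1: "bouquet_move\<^sup>*\<^sup>* (s @ (q @ [u]) @ [z] @ v) (s @ q @ [z] @ (v1 @ [z,u] @ v2))"
    using v by simp
  have "z \<notin> set q" using snoc.prems(1) by auto
  then obtain v' where "bouquet_move\<^sup>*\<^sup>* (s @ q @ [z] @ (v1 @ [z,u] @ v2)) (s @ [z] @ v')"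
    using snoc.IH[of "v1 @ [z,u] @ v2"] by auto
  with s1 show ?case by (meson rtranclp_trans)
qed

lemma grow:
  assumes bw: "bouquet_word n w" and "k \<le> n"
  shows "\<exists>w'. bouquet_move\<^sup>*\<^sup>* w w' \<and> distinct (take k w')"
  using assms(2)
proof (induction k)
  case 0 then show ?case by auto
next
  case (Suc k)
  then obtain w' where r: "bouquet_move\<^sup>*\<^sup>* w w'" and d: "distinct (take k w')" by auto
  have mw: "mset w' = mset w" using reach_mset[OF r] .
  have lw: "length w' = 2 * n" using bw mw unfolding bouquet_word_def
    by (metis size_mset)
  have sw: "set w' = set w" using mw by (metis set_mset_mset)
  have cnt: "\<And>a. a < n \<Longrightarrow> count (mset w') a = 2" using bw mw unfolding bouquet_word_def by simp
  define p where "p = take k w'"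
  define r' where "r' = drop k w'"
  have lp: "length p = k" using Suc.prems lw unfolding p_def by simp
  have "card (set p) = k" using d lp distinct_card unfolding p_def by metis
  hence "\<not> {0..<n} \<subseteq> set p" using Suc.prems
    by (metis atLeastLessThan_iff card_atLeastLessThan card_mono finite_set not_less_eq_eq diff_zero)
  then obtain z where z: "z < n" "z \<notin> set p" by (meson atLeastLessThan_iff subsetI zero_le)
  have wsplit: "w' = p @ r'" unfolding p_def r'_def by simp
  have "count (mset p) z = 0" using z by (simp add: count_mset_0_iff)
  moreover have "count (mset w') z = count (mset p) z + count (mset r') z" by (simp add: wsplit)
  ultimately have "count (mset r') z = 2" using cnt[OF z(1)] by linarith
  hence zr: "z \<in> set r'" by (metis count_mset_0_iff zero_neq_numeral)
  define q where "q = takeWhile (\<lambda>x. x \<in> set p) r'"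
  define t where "t = dropWhile (\<lambda>x. x \<in> set p) r'"
  have rt: "r' = q @ t" unfolding q_def t_def by simp
  have "t \<noteq> []" using zr z(2) unfolding t_def
    by (metis dropWhile_eq_Nil_conv)
  then obtain y v where t: "t = y # v" by (cases t) auto
  have yp: "y \<notin> set p" using t unfolding t_def
    by (metis dropWhile_eq_Cons_conv)
  have yq: "y \<notin> set q" using yp unfolding q_def by (meson set_takeWhileD)
  have yn: "y < n" using bw sw wsplit rt t unfolding bouquet_word_def by auto
  have "count (mset p) y = 0" "count (mset q) y = 0" using yp yq by (auto simp: count_mset_0_iff)
  moreover have "count (mset w') y = count (mset p) y + count (mset q) y + 1 + count (mset v) y"
    by (simp add: wsplit rt t)
  ultimately have "count (mset v) y = 1" using cnt[OF yn] by linarith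
  hence yv: "y \<in> set v" by (metis count_mset_0_iff zero_neq_one)
  obtain v' where r2: "bouquet_move\<^sup>*\<^sup>* (p @ q @ [y] @ v) (p @ [y] @ v')"
    using pull[OF yq yv] by blast
  have "w' = p @ q @ [y] @ v" using wsplit rt t by simp
  hence "bouquet_move\<^sup>*\<^sup>* w (p @ [y] @ v')" using r r2 by (metis rtranclp_trans)
  moreover have "take (Suc k) (p @ [y] @ v') = p @ [y]" using lp by simp
  moreover have "distinct (p @ [y])" using d yp unfolding p_def by simp
  ultimately show ?case by metis
qed

theorem mainTheorem3:
  fixes n :: nat and w :: "nat list"
  assumes "bouquet_word n w"
  shows "\<exists>w'. bouquet_move\<^sup>*\<^sup>* w w' \<and> bouquet_word n w' \<and> bands_split n w'"
proof -
  obtain w' where r: "bouquet_move\<^sup>*\<^sup>* w w'" and d: "distinct (take n w')"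
    using grow[OF assms order_refl] by blast
  have mw: "mset w' = mset w" using reach_mset[OF r] .
  have bw': "bouquet_word n w'" using assms mw unfolding bouquet_word_def
    by (metis set_mset_mset size_mset)
  have lw: "length w' = 2 * n" using bw' unfolding bouquet_word_def by simp
  have lt: "length (take n w') = n" using lw by simp
  have sub: "set (take n w') \<subseteq> {0..<n}" using bw' unfolding bouquet_word_def
    by (auto dest: in_set_takeD)
  have "card (set (take n w')) = n" using d lt distinct_card by metis
  hence st: "set (take n w') = {0..<n}" using sub
    by (simp add: card_subset_eq)
  have "bands_split n w'"
    unfolding bands_split_def
  proof (intro allI impI conjI)
    fix a assume a: "a < n"
    show c1: "count (mset (take n w')) a = 1" using d st a
      by (simp add: distinct_count_atmost_1)
    have "count (mset w') a = 2" using bw' a unfolding bouquet_word_def by simp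
    moreover have "mset w' = mset (take n w') + mset (drop n w')"
      by (metis append_take_drop_id mset_append)
    ultimately show "count (mset (drop n w')) a = 1" using c1 by simp
  qed
  with r bw' show ?thesis by blast
qed

end
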